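(* Let $R\in\mathbb{Z}[x]$ be a nonzero polynomial with $R=\prod_{i=1}^{\deg R} r_i^{\,i}$, where $r_i\in\mathbb{Z}[x]$ are square-free and pairwise coprime. Let $I=(a,b)\subset\mathbb{R}$ be an interval containing a root $\alpha$ of $r_{i_0}$, and put $m_I=(a+b)/2$, $r_I=(b-a)/2$. If $T^{(r_{i_0})'}_{3/2}(m_I,8r_I)$ holds and $T^{r_i}_1(m_I,8r_I)$ holds for all $i\neq i_0$, then the disc $\Delta_{2r_I}(m_I)=\{z\in\mathbb{C}:|z-m_I|<2r_I\}$ contains $\alpha$ and no other complex root of $R$, and for every $z\in\mathbb{C}$ with $|z-m_I|=2r_I$, $$|R(z)|>2^{-i_0-\deg R}\,|R(m_I-2r_I)|.$$
   Context: For $p\in\mathbb{R}[x]$ and reals $m,r,K$, the predicate $T^p_K(m,r)$ means $|p(m)|-K\sum_{k\ge1}\left|\frac{p^{(k)}(m)}{k!}\right|r^k>0$, where $p^{(k)}$ is the $k$-th derivative of $p$. *)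

theory Defs
  imports "HOL-Analysis.Analysis" "HOL-Computational_Algebra.Computational_Algebra"
begin

text \<open>The test predicate T^p_K(m,r): |p(m)| - K * sum_{k>=1} |p^(k)(m)/k!| r^k > 0.
  The k-th derivatives vanish for k > degree p, so the sum is finite.\<close>
definition T_test :: "real poly \<Rightarrow> real \<Rightarrow> real \<Rightarrow> real \<Rightarrow> bool" where
  "T_test p K m r \<longleftrightarrow>
     \<bar>poly p m\<bar> - K * (\<Sum>k\<in>{1..degree p}. \<bar>poly ((pderiv ^^ k) p) m / fact k\<bar> * r ^ k) > 0"

end

theory Submission
  imports Defs
begin

lemma higher_pderiv_pcompose_shift:
  fixes p :: "'a::field_char_0 poly"
  shows "(pderiv^^k) (p \<circ>\<^sub>p [:a,1:]) = ((pderiv^^k) p) \<circ>\<^sub>p [:a,1:]"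
  by (induction k) (simp_all add: pderiv_pcompose pderiv_pCons)

lemma taylor_poly:
  fixes p :: "'a::field_char_0 poly"
  shows "poly p (a + h) = (\<Sum>k\<le>degree p. poly ((pderiv^^k) p) a / fact k * h^k)"
proof -
  define q where "q = p \<circ>\<^sub>p [:a,1:]"
  have cq: "coeff q k = poly ((pderiv^^k) p) a / fact k" for k
  proof -
    have "coeff ((pderiv ^^ k) q) 0 = fact k * coeff q k"
      using coeff_higher_pderiv[of k q 0] by (simp add: pochhammer_fact)
    moreover have "coeff ((pderiv ^^ k) q) 0 = poly ((pderiv^^k) p) a"
      by (simp add: q_def higher_pderiv_pcompose_shift poly_0_coeff_0[symmetric] poly_pcompose)
    ultimately show ?thesis by (simp add: field_simps)
  qed
  have dq: "degree q = degree p" by (simp add: q_def degree_pcompose)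
  have "poly p (a+h) = poly q h" by (simp add: q_def poly_pcompose add.commute)
  also have "\<dots> = (\<Sum>k\<le>degree q. coeff q k * h^k)" by (rule poly_altdef)
  finally show ?thesis by (simp add: cq dq)
qed

lemma pderiv_map_of_real:
  "pderiv (map_poly (of_real :: real \<Rightarrow> 'a::{real_algebra_1,field_char_0}) p) = map_poly of_real (pderiv p)"
  by (rule poly_eqI) (simp add: coeff_pderiv coeff_map_poly)

lemma higher_pderiv_map_of_real:
  "(pderiv^^k) (map_poly (of_real :: real \<Rightarrow> 'a::{real_algebra_1,field_char_0}) p) = map_poly of_real ((pderiv^^k) p)"
  by (induction k) (simp_all add: pderiv_map_of_real)

lemma poly_map_of_real: "poly (map_poly (of_real :: real \<Rightarrow> 'a::{real_algebra_1,field_char_0}) p) (of_real x) = of_real (poly p x)"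
  by (induction p) (auto simp: map_poly_pCons)

lemma pderiv_map_of_int:
  "pderiv (map_poly (of_int :: int \<Rightarrow> 'a::{comm_ring_1,semiring_no_zero_divisors}) p) = map_poly of_int (pderiv p)"
  by (rule poly_eqI) (simp add: coeff_pderiv coeff_map_poly)

lemma map_of_int_mult:
  "map_poly (of_int :: int \<Rightarrow> 'a::{comm_ring_1,semiring_no_zero_divisors}) (p * q) = map_poly of_int p * map_poly of_int q"
  by (rule poly_eqI) (simp add: coeff_map_poly coeff_mult)

lemma map_of_int_power:
  "map_poly (of_int :: int \<Rightarrow> 'a::{comm_ring_1,semiring_no_zero_divisors}) (p ^ n) = map_poly of_int p ^ n"
  by (induction n) (simp_all add: map_of_int_mult)

lemma map_of_int_prod:
  "map_poly (of_int :: int \<Rightarrow> 'a::{comm_ring_1,semiring_no_zero_divisors}) (\<Prod>i\<in>A. f i) = (\<Prod>i\<in>A. map_poly of_int (f i))"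
  by (induction A rule: infinite_finite_induct) (simp_all add: map_of_int_mult)

lemma map_of_int_complex:
  "map_poly (of_int :: int \<Rightarrow> complex) p = map_poly of_real (map_poly of_int p)"
  by (simp add: map_poly_map_poly o_def)

definition cf :: "real poly \<Rightarrow> real \<Rightarrow> nat \<Rightarrow> real" where
  "cf p m k = poly ((pderiv^^k) p) m / fact k"

lemma complex_taylor:
  "poly (map_poly of_real p) z = (\<Sum>k\<le>degree p. complex_of_real (cf p m k) * (z - of_real m)^k)"
proof -
  have "poly (map_poly of_real p) z = poly (map_poly of_real p) (of_real m + (z - of_real m))" by simp
  also have "\<dots> = (\<Sum>k\<le>degree (map_poly complex_of_real p). poly ((pderiv^^k) (map_poly of_real p)) (of_real m) / fact k * (z - of_real m)^k)"
    by (rule taylor_poly)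
  also have "\<dots> = (\<Sum>k\<le>degree p. complex_of_real (cf p m k) * (z - of_real m)^k)"
    by (simp add: degree_map_poly higher_pderiv_map_of_real poly_map_of_real cf_def)
  finally show ?thesis .
qed

lemma cf0: "cf p m 0 = poly p m" by (simp add: cf_def)
lemma cf1: "cf p m 1 = poly (pderiv p) m" by (simp add: cf_def)

lemma pow_scale: "(8*\<rho>::real)^k = 4^k * (2*\<rho>)^k"
proof -
  have "8*\<rho> = 4*(2*\<rho>)" by simp
  then show ?thesis by (simp only: power_mult_distrib)
qed

lemma bound0:
  assumes "\<rho> > 0" "cmod (z - of_real m) \<le> 2*\<rho>"
  shows "cmod (poly (map_poly of_real p) z - of_real (poly p m))
          \<le> (\<Sum>k\<in>{1..degree p}. \<bar>cf p m k\<bar> * (8*\<rho>)^k) / 4"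
proof -
  have sp: "{..degree p} = insert 0 {1..degree p}" by auto
  have "poly (map_poly of_real p) z - of_real (poly p m)
      = (\<Sum>k\<in>{1..degree p}. complex_of_real (cf p m k) * (z - of_real m)^k)"
  proof -
    have e: "(\<Sum>k\<le>degree p. g k) = g 0 + (\<Sum>k\<in>{1..degree p}. g k)" for g :: "nat \<Rightarrow> complex"
    proof -
      have "(\<Sum>k\<le>degree p. g k) = (\<Sum>k\<in>insert 0 {1..degree p}. g k)" by (simp only: sp)
      also have "\<dots> = g 0 + (\<Sum>k\<in>{1..degree p}. g k)" by (rule sum.insert) auto
      finally show ?thesis .
    qed
    show ?thesis unfolding complex_taylor[of p z m] e by (simp add: cf0)
  qed
  also have "cmod \<dots> \<le> (\<Sum>k\<in>{1..degree p}. cmod (complex_of_real (cf p m k) * (z - of_real m)^k))"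
    by (rule norm_sum)
  also have "\<dots> \<le> (\<Sum>k\<in>{1..degree p}. \<bar>cf p m k\<bar> * (8*\<rho>)^k / 4)"
  proof (rule sum_mono)
    fix k assume k: "k \<in> {1..degree p}"
    have "cmod (z - of_real m) ^ k \<le> (2*\<rho>)^k"
      by (rule power_mono) (use assms in auto)
    also have "(2*\<rho>)^k * 4 \<le> (8*\<rho>)^k"
    proof -
      have "(8*\<rho>)^k = 4^k * (2*\<rho>)^k" by (rule pow_scale)
      moreover have "(4::real) \<le> 4^k" using k by (cases k) auto
      moreover have "(2*\<rho>)^k \<ge> 0" using assms by simp
      ultimately show ?thesis by (metis mult.commute mult_right_mono)
    qed
    finally have X: "cmod (z - of_real m) ^ k \<le> (8*\<rho>)^k / 4" by simp
    have e1: "cmod (complex_of_real (cf p m k) * (z - of_real m)^k) = \<bar>cf p m k\<bar> * cmod (z - of_real m)^k"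
      by (simp add: norm_mult norm_power)
    have e2: "\<bar>cf p m k\<bar> * cmod (z - of_real m)^k \<le> \<bar>cf p m k\<bar> * ((8*\<rho>)^k / 4)"
      by (rule mult_left_mono[OF X]) simp
    show "cmod (complex_of_real (cf p m k) * (z - of_real m)^k) \<le> \<bar>cf p m k\<bar> * (8*\<rho>)^k / 4"
      unfolding e1 using e2 by (simp only: times_divide_eq_right)
  qed
  also have "\<dots> = (\<Sum>k\<in>{1..degree p}. \<bar>cf p m k\<bar> * (8*\<rho>)^k) / 4"
    by (simp add: sum_divide_distrib)
  finally show ?thesis .
qed

lemma pow_diff_bound:
  fixes x y :: complex
  assumes "cmod x \<le> s" "cmod y \<le> s"
  shows "cmod (x^k - y^k) \<le> real k * s^(k-1) * cmod (x - y)"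
proof -
  have s0: "s \<ge> 0" using assms(1) norm_ge_zero order_trans by blast
  have "cmod (x^k - y^k) = cmod (x - y) * cmod (\<Sum>i<k. y^(k - Suc i) * x^i)"
    by (simp add: power_diff_sumr2 norm_mult)
  also have "cmod (\<Sum>i<k. y^(k - Suc i) * x^i) \<le> (\<Sum>i<k. s^(k-1))"
  proof -
    have "cmod (\<Sum>i<k. y^(k - Suc i) * x^i) \<le> (\<Sum>i<k. cmod (y^(k - Suc i) * x^i))"
      by (rule norm_sum)
    also have "\<dots> \<le> (\<Sum>i<k. s^(k-1))"
    proof (rule sum_mono)
      fix i assume i: "i \<in> {..<k}"
      have "cmod (y^(k - Suc i) * x^i) = cmod y ^ (k - Suc i) * cmod x ^ i"
        by (simp add: norm_mult norm_power)
      also have "\<dots> \<le> s ^ (k - Suc i) * s ^ i"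
        by (intro mult_mono power_mono) (use assms s0 in auto)
      also have "\<dots> = s^(k-1)" using i by (simp add: power_add[symmetric])
      finally show "cmod (y^(k - Suc i) * x^i) \<le> s^(k-1)" .
    qed
    finally show ?thesis .
  qed
  finally have "cmod (x^k - y^k) \<le> cmod (x - y) * (\<Sum>i<k. s^(k-1))"
    by (simp add: mult_left_mono)
  then show ?thesis by (simp add: mult_ac)
qed

lemma bound1:
  assumes "\<rho> > 0" "cmod (u - of_real m) \<le> 2*\<rho>" "cmod (v - of_real m) \<le> 2*\<rho>"
  shows "cmod (poly (map_poly of_real p) u - poly (map_poly of_real p) v - of_real (cf p m 1) * (u - v))
     \<le> cmod (u - v) * (\<Sum>k\<in>{2..degree p}. real k * \<bar>cf p m k\<bar> * (2*\<rho>)^(k-1))"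
proof (cases "degree p = 0")
  case True
  then have "pderiv p = 0" using pderiv_eq_0_iff by blast
  then have c1: "cf p m 1 = 0" unfolding cf1 by simp
  have "poly (map_poly of_real p) u = poly (map_poly of_real p) v"
    unfolding complex_taylor[of p u m] complex_taylor[of p v m] using True by simp
  then show ?thesis using True c1 by simp
next
  case False
  define g where "g k = complex_of_real (cf p m k) * ((u - of_real m)^k - (v - of_real m)^k)" for k
  have "poly (map_poly of_real p) u - poly (map_poly of_real p) v = (\<Sum>k\<le>degree p. g k)"
    unfolding complex_taylor[of p u m] complex_taylor[of p v m] g_def
    by (simp only: sum_subtractf[symmetric] right_diff_distrib)
  also have "{..degree p} = insert 0 (insert 1 {2..degree p})" using False by auto
  also have "(\<Sum>k\<in>insert 0 (insert 1 {2..degree p}). g k) = g 0 + (\<Sum>k\<in>insert 1 {2..degree p}. g k)"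
    by (rule sum.insert) auto
  also have "(\<Sum>k\<in>insert 1 {2..degree p}. g k) = g 1 + (\<Sum>k\<in>{2..degree p}. g k)"
    by (rule sum.insert) auto
  also have "g 0 = 0" by (simp add: g_def)
  also have "g 1 = of_real (cf p m 1) * (u - v)" by (simp add: g_def)
  finally have d0: "poly (map_poly of_real p) u - poly (map_poly of_real p) v
        = 0 + (of_real (cf p m 1) * (u - v) + (\<Sum>k\<in>{2..degree p}. g k))" .
  have d: "poly (map_poly of_real p) u - poly (map_poly of_real p) v - of_real (cf p m 1) * (u - v)
        = (\<Sum>k\<in>{2..degree p}. g k)" unfolding d0 by (simp only: add_0_left add_diff_cancel_left')
  have "cmod (\<Sum>k\<in>{2..degree p}. g k) \<le> (\<Sum>k\<in>{2..degree p}. cmod (g k))" by (rule norm_sum)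
  also have "\<dots> \<le> (\<Sum>k\<in>{2..degree p}. cmod (u - v) * (real k * \<bar>cf p m k\<bar> * (2*\<rho>)^(k-1)))"
  proof (rule sum_mono)
    fix k
    have "cmod ((u - of_real m)^k - (v - of_real m)^k) \<le> real k * (2*\<rho>)^(k-1) * cmod ((u - of_real m) - (v - of_real m))"
      by (rule pow_diff_bound) (use assms in auto)
    then have "\<bar>cf p m k\<bar> * cmod ((u - of_real m)^k - (v - of_real m)^k) \<le> \<bar>cf p m k\<bar> * (real k * (2*\<rho>)^(k-1) * cmod (u - v))"
      by (simp add: mult_left_mono)
    then show "cmod (g k) \<le> cmod (u - v) * (real k * \<bar>cf p m k\<bar> * (2*\<rho>)^(k-1))"
      by (simp add: g_def norm_mult mult_ac)
  qed
  also have "\<dots> = cmod (u - v) * (\<Sum>k\<in>{2..degree p}. real k * \<bar>cf p m k\<bar> * (2*\<rho>)^(k-1))"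
    by (simp add: sum_distrib_left)
  finally show ?thesis by (simp only: d)
qed


lemma Tder:
  assumes "\<rho> > 0" "T_test (pderiv p) (3/2) m (8*\<rho>)"
  shows "6 * (\<Sum>k\<in>{2..degree p}. real k * \<bar>cf p m k\<bar> * (2*\<rho>)^(k-1)) < \<bar>cf p m 1\<bar>"
proof -
  define S where "S = (\<Sum>k\<in>{2..degree p}. real k * \<bar>cf p m k\<bar> * (8*\<rho>)^(k-1))"
  have eq: "(\<Sum>j\<in>{1..degree (pderiv p)}. \<bar>poly ((pderiv ^^ j) (pderiv p)) m / fact j\<bar> * (8*\<rho>)^j) = S"
  proof (cases "degree p")
    case 0
    then show ?thesis by (simp add: S_def degree_pderiv)
  next
    case (Suc n)
    have "S = (\<Sum>k\<in>{Suc 1..Suc n}. real k * \<bar>cf p m k\<bar> * (8*\<rho>)^(k-1))"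
      by (simp add: S_def Suc numeral_2_eq_2)
    also have "\<dots> = (\<Sum>j\<in>{1..n}. real (Suc j) * \<bar>cf p m (Suc j)\<bar> * (8*\<rho>)^j)"
      by (subst sum.shift_bounds_cl_Suc_ivl) simp
    also have "\<dots> = (\<Sum>j\<in>{1..n}. \<bar>poly ((pderiv ^^ j) (pderiv p)) m / fact j\<bar> * (8*\<rho>)^j)"
    proof (rule sum.cong)
      fix j
      have "(pderiv ^^ j) (pderiv p) = (pderiv ^^ Suc j) p" by (simp only: funpow_Suc_right o_def)
      moreover have f: "(fact (Suc j)::real) = real (Suc j) * fact j" by (simp add: fact_Suc)
      moreover have "real (Suc j) * \<bar>cf p m (Suc j)\<bar> = \<bar>poly ((pderiv ^^ Suc j) p) m / fact j\<bar>"
        unfolding cf_def f by (simp add: abs_divide abs_mult)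
      ultimately show "real (Suc j) * \<bar>cf p m (Suc j)\<bar> * (8*\<rho>)^j = \<bar>poly ((pderiv ^^ j) (pderiv p)) m / fact j\<bar> * (8*\<rho>)^j"
        by simp
    qed simp
    finally show ?thesis by (simp add: degree_pderiv Suc)
  qed
  have T: "\<bar>cf p m 1\<bar> - 3/2 * S > 0"
    using assms(2) cf1[of p m] unfolding T_test_def eq by simp
  have "(\<Sum>k\<in>{2..degree p}. real k * \<bar>cf p m k\<bar> * (2*\<rho>)^(k-1)) \<le> (\<Sum>k\<in>{2..degree p}. real k * \<bar>cf p m k\<bar> * (8*\<rho>)^(k-1) / 4)"
  proof (rule sum_mono)
    fix k assume k: "k \<in> {2..degree p}"
    have "(2*\<rho>)^(k-1) * 4 \<le> (8*\<rho>)^(k-1)"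
    proof -
      have "(8*\<rho>)^(k-1) = 4^(k-1) * (2*\<rho>)^(k-1)" by (rule pow_scale)
      moreover have "(4::real) \<le> 4^(k-1)" using k by (cases "k-1") auto
      moreover have "(2*\<rho>)^(k-1) \<ge> 0" using assms by simp
      ultimately show ?thesis by (metis mult.commute mult_right_mono)
    qed
    then have "(2*\<rho>)^(k-1) \<le> (8*\<rho>)^(k-1) / 4" by simp
    then show "real k * \<bar>cf p m k\<bar> * (2*\<rho>)^(k-1) \<le> real k * \<bar>cf p m k\<bar> * (8*\<rho>)^(k-1) / 4"
      by (metis mult_left_mono times_divide_eq_right abs_ge_zero of_nat_0_le_iff zero_le_mult_iff)
  qed
  also have "\<dots> = S / 4" by (simp add: S_def sum_divide_distrib)
  finally show ?thesis using T by linarith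
qed


lemma other_bounds:
  assumes rho: "\<rho> > 0" and T: "T_test p 1 m (8*\<rho>)"
  shows other_nz: "cmod (z - of_real m) \<le> 2*\<rho> \<Longrightarrow> cmod (poly (map_poly of_real p) z) > 0"
    and other_ratio: "cmod (z - of_real m) \<le> 2*\<rho> \<Longrightarrow> cmod (w - of_real m) \<le> 2*\<rho> \<Longrightarrow>
       (1/2)^degree p * cmod (poly (map_poly of_real p) w) \<le> cmod (poly (map_poly of_real p) z)"
proof -
  define S where "S = (\<Sum>k\<in>{1..degree p}. \<bar>cf p m k\<bar> * (8*\<rho>)^k)"
  have S0: "S \<ge> 0" unfolding S_def using rho by (intro sum_nonneg) auto
  have TS: "\<bar>poly p m\<bar> - S > 0" using T unfolding T_test_def S_def cf_def by simp
  have lo: "cmod (poly (map_poly of_real p) u) \<ge> \<bar>poly p m\<bar> - S/4" if "cmod (u - of_real m) \<le> 2*\<rho>" for u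
  proof -
    have "cmod (poly (map_poly of_real p) u - of_real (poly p m)) \<le> S/4"
      using bound0[OF rho that] unfolding S_def .
    moreover have "cmod (of_real (poly p m) :: complex) \<le> cmod (poly (map_poly of_real p) u) + cmod (poly (map_poly of_real p) u - of_real (poly p m))"
      using norm_triangle_ineq4[of "poly (map_poly of_real p) u" "poly (map_poly of_real p) u - of_real (poly p m)"] by simp
    ultimately show ?thesis by simp
  qed
  have hi: "cmod (poly (map_poly of_real p) u) \<le> \<bar>poly p m\<bar> + S/4" if "cmod (u - of_real m) \<le> 2*\<rho>" for u
  proof -
    have "cmod (poly (map_poly of_real p) u - of_real (poly p m)) \<le> S/4"
      using bound0[OF rho that] unfolding S_def .
    moreover have "cmod (poly (map_poly of_real p) u) \<le> cmod (of_real (poly p m) :: complex) + cmod (poly (map_poly of_real p) u - of_real (poly p m))"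
      using norm_triangle_ineq[of "of_real (poly p m)" "poly (map_poly of_real p) u - of_real (poly p m)"] by simp
    ultimately show ?thesis by simp
  qed
  show "cmod (z - of_real m) \<le> 2*\<rho> \<Longrightarrow> cmod (poly (map_poly of_real p) z) > 0"
    using lo[of z] TS S0 by linarith
  assume z: "cmod (z - of_real m) \<le> 2*\<rho>" and w: "cmod (w - of_real m) \<le> 2*\<rho>"
  show "(1/2)^degree p * cmod (poly (map_poly of_real p) w) \<le> cmod (poly (map_poly of_real p) z)"
  proof (cases "degree p = 0")
    case True
    then have "S = 0" by (simp add: S_def)
    then show ?thesis using True lo[OF z] hi[OF w] by simp
  next
    case False
    have "(1/2::real)^degree p \<le> 1/2" using False by (cases "degree p") (auto intro!: power_le_one)
    then have "(1/2)^degree p * cmod (poly (map_poly of_real p) w) \<le> 1/2 * cmod (poly (map_poly of_real p) w)"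
      by (rule mult_right_mono) simp
    also have "\<dots> \<le> cmod (poly (map_poly of_real p) z)"
      using lo[OF z] hi[OF w] TS S0 by linarith
    finally show ?thesis .
  qed
qed

lemma i0_bounds:
  assumes rho: "\<rho> > 0" and T: "T_test (pderiv p) (3/2) m (8*\<rho>)"
    and al: "\<bar>\<alpha> - m\<bar> < \<rho>" and root: "poly p \<alpha> = 0"
  shows i0_unique: "cmod (z - of_real m) \<le> 2*\<rho> \<Longrightarrow> poly (map_poly of_real p) z = 0 \<Longrightarrow> z = of_real \<alpha>"
    and i0_ratio: "cmod (z - of_real m) = 2*\<rho> \<Longrightarrow>
       (1/2)^(1 + degree p) * cmod (poly (map_poly of_real p) (of_real (m - 2*\<rho>))) < cmod (poly (map_poly of_real p) z)"
proof -
  define E where "E = (\<Sum>k\<in>{2..degree p}. real k * \<bar>cf p m k\<bar> * (2*\<rho>)^(k-1))"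
  define c where "c = \<bar>cf p m 1\<bar>"
  have E0: "E \<ge> 0" unfolding E_def using rho by (intro sum_nonneg) auto
  have cE: "6 * E < c" using Tder[OF rho T] unfolding E_def c_def .
  have Pa: "poly (map_poly of_real p) (of_real \<alpha>) = (0::complex)" using poly_map_of_real[of p \<alpha>] root by simp
  have am0: "cmod (of_real \<alpha> - of_real m :: complex) = \<bar>\<alpha> - m\<bar>" by (simp flip: of_real_diff)
  have am: "cmod (of_real \<alpha> - of_real m) \<le> 2*\<rho>" using al rho am0 by linarith
  have lo: "cmod (poly (map_poly of_real p) u) \<ge> (c - E) * cmod (u - of_real \<alpha>)" if u: "cmod (u - of_real m) \<le> 2*\<rho>" for u
  proof -
    have b: "cmod (poly (map_poly of_real p) u - 0 - of_real (cf p m 1) * (u - of_real \<alpha>)) \<le> cmod (u - of_real \<alpha>) * E"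
      using bound1[OF rho u am, of p] unfolding E_def Pa .
    have "c * cmod (u - of_real \<alpha>) = cmod (of_real (cf p m 1) * (u - of_real \<alpha>))" by (simp add: c_def norm_mult)
    also have "\<dots> \<le> cmod (poly (map_poly of_real p) u) + cmod (poly (map_poly of_real p) u - 0 - of_real (cf p m 1) * (u - of_real \<alpha>))"
      using norm_triangle_ineq4[of "poly (map_poly of_real p) u" "poly (map_poly of_real p) u - 0 - of_real (cf p m 1) * (u - of_real \<alpha>)"] by simp
    finally show ?thesis using b by (simp add: algebra_simps)
  qed
  have hi: "cmod (poly (map_poly of_real p) u) \<le> (c + E) * cmod (u - of_real \<alpha>)" if u: "cmod (u - of_real m) \<le> 2*\<rho>" for u
  proof -
    have b: "cmod (poly (map_poly of_real p) u - 0 - of_real (cf p m 1) * (u - of_real \<alpha>)) \<le> cmod (u - of_real \<alpha>) * E"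
      using bound1[OF rho u am, of p] unfolding E_def Pa .
    have "cmod (poly (map_poly of_real p) u) \<le> cmod (of_real (cf p m 1) * (u - of_real \<alpha>)) + cmod (poly (map_poly of_real p) u - 0 - of_real (cf p m 1) * (u - of_real \<alpha>))"
      using norm_triangle_ineq[of "of_real (cf p m 1) * (u - of_real \<alpha>)" "poly (map_poly of_real p) u - 0 - of_real (cf p m 1) * (u - of_real \<alpha>)"] by simp
    also have "cmod (of_real (cf p m 1) * (u - of_real \<alpha>)) = c * cmod (u - of_real \<alpha>)" by (simp add: c_def norm_mult)
    finally show ?thesis using b by (simp add: algebra_simps)
  qed
  show "cmod (z - of_real m) \<le> 2*\<rho> \<Longrightarrow> poly (map_poly of_real p) z = 0 \<Longrightarrow> z = of_real \<alpha>"
  proof -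
    assume z: "cmod (z - of_real m) \<le> 2*\<rho>" and P0: "poly (map_poly of_real p) z = 0"
    have "(c - E) * cmod (z - of_real \<alpha>) \<le> 0" using lo[OF z] P0 by simp
    moreover have "c - E > 0" using cE E0 by linarith
    ultimately have "cmod (z - of_real \<alpha>) \<le> 0" by (simp add: mult_le_0_iff)
    then show "z = of_real \<alpha>" by simp
  qed
  assume z: "cmod (z - of_real m) = 2*\<rho>"
  define w where "w = (of_real (m - 2*\<rho>) :: complex)"
  have w: "cmod (w - of_real m) \<le> 2*\<rho>" using rho by (simp add: w_def flip: of_real_diff)
  have zr: "cmod (z - of_real \<alpha>) > \<rho>"
  proof -
    have "cmod (z - of_real m) \<le> cmod (z - of_real \<alpha>) + cmod (of_real \<alpha> - of_real m :: complex)"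
      using norm_triangle_ineq[of "z - of_real \<alpha>" "of_real \<alpha> - of_real m"] by simp
    moreover have "cmod (of_real \<alpha> - of_real m :: complex) = \<bar>\<alpha> - m\<bar>" by (simp flip: of_real_diff)
    ultimately show ?thesis using z al by linarith
  qed
  have wr: "cmod (w - of_real \<alpha>) < 3*\<rho>"
  proof -
    have "cmod (w - of_real \<alpha>) = \<bar>m - 2*\<rho> - \<alpha>\<bar>" by (simp add: w_def flip: of_real_diff)
    then show ?thesis using al rho by (simp add: abs_if split: if_splits)
  qed
  have zl: "cmod (poly (map_poly of_real p) z) > (c - E) * \<rho>"
  proof -
    have "(c - E) * \<rho> < (c - E) * cmod (z - of_real \<alpha>)"
      using zr cE E0 by (intro mult_strict_left_mono) auto
    then show ?thesis using lo[of z] z by simp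
  qed
  have wh: "cmod (poly (map_poly of_real p) w) \<le> (c + E) * (3*\<rho>)"
  proof -
    have "(c + E) * cmod (w - of_real \<alpha>) \<le> (c + E) * (3*\<rho>)"
      using wr cE E0 by (intro mult_left_mono) auto
    then show ?thesis using hi[OF w] by simp
  qed
  have d1: "degree p \<ge> 1"
  proof (rule ccontr)
    assume "\<not> degree p \<ge> 1"
    then have "pderiv p = 0" using pderiv_eq_0_iff by fastforce
    then have "c = 0" unfolding c_def cf1 by simp
    then show False using cE E0 by linarith
  qed
  show "(1/2)^(1 + degree p) * cmod (poly (map_poly of_real p) (of_real (m - 2*\<rho>))) < cmod (poly (map_poly of_real p) z)"
  proof (cases "degree p = 1")
    case True
    then have "E = 0" by (simp add: E_def)
    then have "(1/2)^(1 + degree p) * cmod (poly (map_poly of_real p) w) \<le> 1/4 * (c * (3*\<rho>))"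
      using wh True by simp
    also have "\<dots> < c * \<rho>" using cE E0 rho \<open>E = 0\<close> by simp
    finally show ?thesis using zl \<open>E = 0\<close> by (simp add: w_def)
  next
    case False
    then have "degree p \<ge> 2" using d1 by simp
    then have "(1/2::real)^(1 + degree p) \<le> (1/2)^3" by (intro power_decreasing) auto
    then have h8: "(1/2::real)^(1 + degree p) \<le> 1/8" by (simp add: power3_eq_cube)
    have "(1/2)^(1 + degree p) * cmod (poly (map_poly of_real p) w) \<le> 1/8 * cmod (poly (map_poly of_real p) w)"
      by (rule mult_right_mono[OF h8]) simp
    also have "\<dots> \<le> 1/8 * ((c + E) * (3*\<rho>))" using wh by simp
    also have "\<dots> \<le> (c - E) * \<rho>"
    proof -
      have "(c + E) * 3 \<le> (c - E) * 8" using cE E0 by (simp add: algebra_simps)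
      then have "((c + E) * 3) * \<rho> \<le> ((c - E) * 8) * \<rho>" using rho by (intro mult_right_mono) auto
      then show ?thesis by (simp add: algebra_simps)
    qed
    finally show ?thesis using zl by (simp add: w_def)
  qed
qed


lemma main:
  fixes R :: "int poly" and r :: "nat \<Rightarrow> int poly" and i0 :: nat and m \<rho> \<alpha> :: real
  assumes R0: "R \<noteq> 0" and Rp: "R = (\<Prod>i\<in>{1..degree R}. r i ^ i)" and i0: "i0 \<in> {1..degree R}"
    and rho: "\<rho> > 0" and al: "\<bar>\<alpha> - m\<bar> < \<rho>"
    and root: "poly (map_poly of_int (r i0)) \<alpha> = 0"
    and T0: "T_test (map_poly of_int (pderiv (r i0))) (3/2) m (8*\<rho>)"
    and Ti: "\<forall>i\<in>{1..degree R}. i \<noteq> i0 \<longrightarrow> T_test (map_poly of_int (r i)) 1 m (8*\<rho>)"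
  shows "cmod (complex_of_real \<alpha> - complex_of_real m) < 2*\<rho>
    \<and> (\<forall>z::complex. cmod (z - complex_of_real m) < 2*\<rho> \<and> poly (map_poly of_int R) z = 0 \<longrightarrow> z = complex_of_real \<alpha>)
    \<and> (\<forall>z::complex. cmod (z - complex_of_real m) = 2*\<rho> \<longrightarrow>
        cmod (poly (map_poly of_int R) z) > inverse (2 ^ (i0 + degree R))
          * cmod (poly (map_poly of_int R) (complex_of_real (m - 2*\<rho>))))"
proof -
  define I where "I = {1..degree R}"
  define p where "p i = (map_poly of_int (r i) :: real poly)" for i
  define P where "P i = (map_poly of_real (p i) :: complex poly)" for i
  have fI: "finite I" by (simp add: I_def)
  have i0I: "i0 \<in> I" using i0 by (simp add: I_def)
  have T0': "T_test (pderiv (p i0)) (3/2) m (8*\<rho>)" using T0 by (simp add: p_def pderiv_map_of_int)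
  have Ti': "T_test (p i) 1 m (8*\<rho>)" if "i \<in> I" "i \<noteq> i0" for i
    using Ti that by (simp add: p_def I_def)
  have root': "poly (p i0) \<alpha> = 0" using root by (simp add: p_def)
  have hR: "(\<Prod>i\<in>I. r i ^ i) = R" unfolding I_def using Rp by (rule sym)
  have evalR: "poly (map_poly of_int R) z = (\<Prod>i\<in>I. poly (P i) z ^ i)" for z :: complex
  proof -
    have "map_poly (of_int::int\<Rightarrow>complex) R = map_poly of_int (\<Prod>i\<in>I. r i ^ i)"
      using hR by (rule sym[THEN arg_cong])
    also have "\<dots> = (\<Prod>i\<in>I. map_poly (of_int::int\<Rightarrow>complex) (r i) ^ i)"
      by (simp only: map_of_int_prod map_of_int_power)
    also have "\<dots> = (\<Prod>i\<in>I. P i ^ i)"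
      by (simp add: map_of_int_complex P_def p_def)
    finally show ?thesis by (simp add: poly_prod)
  qed
  have rnz: "r i \<noteq> 0" if "i \<in> I" for i
  proof
    assume "r i = 0"
    then have "r i ^ i = 0" using that by (simp add: I_def)
    then have "(\<Prod>i\<in>I. r i ^ i) = 0" using that fI by (meson prod_zero_iff)
    then show False using hR R0 by simp
  qed
  have degR: "degree R = (\<Sum>i\<in>I. i * degree (r i))"
  proof -
    have "degree R = degree (\<Prod>i\<in>I. r i ^ i)" using hR by simp
    also have "\<dots> = (\<Sum>i\<in>I. degree (r i ^ i))"
      by (rule degree_prod_eq_sum_degree) (use rnz in auto)
    also have "\<dots> = (\<Sum>i\<in>I. i * degree (r i))"
      by (rule sum.cong) (simp_all add: degree_power_eq rnz)
    finally show ?thesis .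
  qed
  have degp: "degree (p i) = degree (r i)" for i
    by (simp add: p_def degree_map_poly)
  have am0: "cmod (of_real \<alpha> - of_real m :: complex) = \<bar>\<alpha> - m\<bar>" by (simp flip: of_real_diff)
  have part1: "cmod (complex_of_real \<alpha> - complex_of_real m) < 2*\<rho>" using am0 al rho by linarith
  have part2: "\<forall>z::complex. cmod (z - complex_of_real m) < 2*\<rho> \<and> poly (map_poly of_int R) z = 0 \<longrightarrow> z = complex_of_real \<alpha>"
  proof (intro allI impI, elim conjE)
    fix z :: complex
    assume z: "cmod (z - complex_of_real m) < 2*\<rho>" and Rz: "poly (map_poly of_int R) z = 0"
    then have z': "cmod (z - complex_of_real m) \<le> 2*\<rho>" by simp
    have "(\<Prod>i\<in>I. poly (P i) z ^ i) = 0" using Rz evalR by simp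
    then obtain i where i: "i \<in> I" and "poly (P i) z ^ i = 0" using fI by (meson prod_zero_iff)
    then have Pz: "poly (P i) z = 0" by simp
    show "z = complex_of_real \<alpha>"
    proof (cases "i = i0")
      case True
      show ?thesis using i0_unique[OF rho T0' al root' z'] Pz True by (simp add: P_def)
    next
      case False
      have "cmod (poly (P i) z) > 0" using other_nz[OF rho Ti'[OF i False] z'] by (simp add: P_def)
      then show ?thesis using Pz by simp
    qed
  qed
  have part3: "\<forall>z::complex. cmod (z - complex_of_real m) = 2*\<rho> \<longrightarrow>
        cmod (poly (map_poly of_int R) z) > inverse (2 ^ (i0 + degree R))
          * cmod (poly (map_poly of_int R) (complex_of_real (m - 2*\<rho>)))"
  proof (intro allI impI)
    fix z :: complex
    assume z: "cmod (z - complex_of_real m) = 2*\<rho>"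
    then have z': "cmod (z - complex_of_real m) \<le> 2*\<rho>" by simp
    define w where "w = complex_of_real (m - 2*\<rho>)"
    have w: "cmod (w - of_real m) \<le> 2*\<rho>" using rho by (simp add: w_def flip: of_real_diff)
    define x where "x i = cmod (poly (P i) z)" for i
    define y where "y i = cmod (poly (P i) w)" for i
    define A where "A i = ((1/2::real)^degree (r i) * y i) ^ i" for i
    have x0: "x i \<ge> 0" "y i \<ge> 0" for i by (simp_all add: x_def y_def)
    have A0: "A i \<ge> 0" for i by (simp add: A_def x0)
    have nx: "cmod (poly (map_poly of_int R) z) = (\<Prod>i\<in>I. x i ^ i)"
      by (simp add: evalR x_def prod_norm[symmetric] norm_power)
    have ny: "cmod (poly (map_poly of_int R) w) = (\<Prod>i\<in>I. y i ^ i)"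
      by (simp add: evalR y_def prod_norm[symmetric] norm_power)
    have others: "A i \<le> x i ^ i \<and> x i ^ i > 0" if "i \<in> I - {i0}" for i
    proof -
      have iI: "i \<in> I" "i \<noteq> i0" using that by auto
      have r1: "(1/2)^degree (r i) * y i \<le> x i"
        using other_ratio[OF rho Ti'[OF iI] z' w] by (simp add: x_def y_def P_def degp)
      have "A i \<le> x i ^ i" unfolding A_def by (rule power_mono[OF r1]) (simp add: x0)
      moreover have "x i > 0" using other_nz[OF rho Ti'[OF iI] z'] by (simp add: x_def P_def)
      ultimately show ?thesis by simp
    qed
    have main0: "(1/2)^i0 * A i0 < x i0 ^ i0"
    proof -
      have r0: "(1/2)^(1 + degree (r i0)) * y i0 < x i0"
        using i0_ratio[OF rho T0' al root' z] by (simp add: x_def y_def P_def degp w_def)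
      have "((1/2)^(1 + degree (r i0)) * y i0) ^ i0 < x i0 ^ i0"
        by (rule power_strict_mono[OF r0]) (use i0 x0 in auto)
      moreover have "((1/2::real)^(1 + degree (r i0)) * y i0) ^ i0 = (1/2)^i0 * A i0"
      proof -
        have "(1/2::real)^(1 + degree (r i0)) * y i0 = (1/2) * ((1/2)^degree (r i0) * y i0)" by simp
        then show ?thesis unfolding A_def by (simp only: power_mult_distrib)
      qed
      ultimately show ?thesis by simp
    qed
    define X where "X = (\<Prod>i\<in>I - {i0}. x i ^ i)"
    define Y where "Y = (\<Prod>i\<in>I - {i0}. A i)"
    have XY: "Y \<le> X" unfolding X_def Y_def by (rule prod_mono) (use others A0 in auto)
    have Y0: "Y \<ge> 0" unfolding Y_def by (rule prod_nonneg) (use A0 in auto)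
    have X0: "X > 0" unfolding X_def by (rule prod_pos) (use others in auto)
    have px: "(\<Prod>i\<in>I. x i ^ i) = x i0 ^ i0 * X" unfolding X_def using fI i0I by (rule prod.remove)
    have pA: "(\<Prod>i\<in>I. A i) = A i0 * Y" unfolding Y_def using fI i0I by (rule prod.remove)
    have "(\<Prod>i\<in>I. A i) = (\<Prod>i\<in>I. (1/2::real)^(i * degree (r i)) * y i ^ i)"
      by (rule prod.cong) (simp_all add: A_def power_mult_distrib power_mult[symmetric] mult.commute)
    also have "\<dots> = (\<Prod>i\<in>I. (1/2::real)^(i * degree (r i))) * (\<Prod>i\<in>I. y i ^ i)"
      by (rule prod.distrib)
    also have "(\<Prod>i\<in>I. (1/2::real)^(i * degree (r i))) = (1/2)^degree R"
      by (simp add: degR power_sum)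
    finally have pA2: "(\<Prod>i\<in>I. A i) = (1/2)^degree R * (\<Prod>i\<in>I. y i ^ i)" .
    have rhs: "inverse (2 ^ (i0 + degree R)) * cmod (poly (map_poly of_int R) w) = (1/2)^i0 * (A i0 * Y)"
    proof -
      have "(1/2::real)^i0 * (A i0 * Y) = (1/2)^i0 * ((1/2)^degree R * (\<Prod>i\<in>I. y i ^ i))"
        by (simp only: pA[symmetric] pA2)
      also have "\<dots> = inverse (2 ^ (i0 + degree R)) * (\<Prod>i\<in>I. y i ^ i)"
        by (simp add: power_add inverse_eq_divide power_divide)
      finally show ?thesis by (simp add: ny)
    qed
    have "(1/2)^i0 * (A i0 * Y) \<le> (1/2)^i0 * A i0 * X"
      using XY A0[of i0] by (simp add: mult_left_mono)
    also have "\<dots> < x i0 ^ i0 * X" using main0 X0 by (simp add: mult_strict_right_mono)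
    finally show "cmod (poly (map_poly of_int R) z) > inverse (2 ^ (i0 + degree R))
          * cmod (poly (map_poly of_int R) (complex_of_real (m - 2*\<rho>)))"
      using rhs nx px by (simp add: w_def)
  qed
  show ?thesis using part1 part2 part3 by blast
qed

theorem lemma1:
  fixes R :: "int poly" and r :: "nat \<Rightarrow> int poly" and i0 :: nat
    and a b \<alpha> :: real
  assumes "R \<noteq> 0"
    and "R = (\<Prod>i\<in>{1..degree R}. r i ^ i)"
    and "\<forall>i\<in>{1..degree R}. squarefree (r i)"
    and "\<forall>i\<in>{1..degree R}. \<forall>j\<in>{1..degree R}. i \<noteq> j \<longrightarrow> coprime (r i) (r j)"
    and "a < b"
    and "i0 \<in> {1..degree R}"
    and "\<alpha> \<in> {a<..<b}"
    and "poly (map_poly of_int (r i0)) \<alpha> = 0"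
    and "T_test (map_poly of_int (pderiv (r i0))) (3/2) ((a+b)/2) (8 * ((b-a)/2))"
    and "\<forall>i\<in>{1..degree R}. i \<noteq> i0 \<longrightarrow>
           T_test (map_poly of_int (r i)) 1 ((a+b)/2) (8 * ((b-a)/2))"
  shows "cmod (complex_of_real \<alpha> - complex_of_real ((a+b)/2)) < 2 * ((b-a)/2)
       \<and> (\<forall>z::complex. cmod (z - complex_of_real ((a+b)/2)) < 2 * ((b-a)/2)
              \<and> poly (map_poly of_int R) z = 0 \<longrightarrow> z = complex_of_real \<alpha>)
       \<and> (\<forall>z::complex. cmod (z - complex_of_real ((a+b)/2)) = 2 * ((b-a)/2) \<longrightarrow>
              cmod (poly (map_poly of_int R) z)
                > inverse (2 ^ (i0 + degree R))
                  * cmod (poly (map_poly of_int R) (complex_of_real ((a+b)/2 - 2 * ((b-a)/2)))))"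
  proof -
  have al: "\<bar>\<alpha> - (a+b)/2\<bar> < (b-a)/2" using assms(7) by (auto simp: abs_if field_simps)
  have rho: "(b-a)/2 > 0" using assms(5) by simp
  show ?thesis
    by (rule main[OF assms(1) assms(2) assms(6) rho al assms(8) assms(9) assms(10)])
qed

end
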